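(* Let $n\ge1$ and let $F,G$ be continuous functions with $0<F(r),G(r)<+\infty$ on an interval $(r_i^-,r_i^+)\subset(0,+\infty)$. Set $a(r)=r^n\sqrt{G(r)/F(r)}$ and $b(r)=r^n\sqrt{F(r)/G(r)}$. If $r_i^->0$, the three statements $\int_{r_i^-}\frac{dr}{b(r)}=+\infty$, $\int_{r_i^-}a(r)\,dr=+\infty$ and $\int_{r_i^-}\sqrt{a(r)/b(r)}\,dr=+\infty$ are equivalent. If $r_i^+$ is finite, the three statements $\int^{r_i^+}\frac{dr}{b(r)}=+\infty$, $\int^{r_i^+}a(r)\,dr=+\infty$ and $\int^{r_i^+}\sqrt{a(r)/b(r)}\,dr=+\infty$ are equivalent.
   Context: Notation: $\int_{r_0}f$ means $\int_{r_0}^{r_0+\varepsilon}f$ and $\int^{r_1}f$ means $\int_{r_1-\varepsilon}^{r_1}f$ for small $\varepsilon>0$. *)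

theory Defs
  imports "HOL-Analysis.Analysis"
begin

definition int_diverges_at_left :: "(real \<Rightarrow> real) \<Rightarrow> real \<Rightarrow> bool" where
  "int_diverges_at_left f r0 \<longleftrightarrow>
     (\<exists>\<delta>>0. \<forall>\<epsilon>. 0 < \<epsilon> \<and> \<epsilon> < \<delta> \<longrightarrow>
        (\<integral>\<^sup>+ x\<in>{r0<..<r0+\<epsilon>}. ennreal (f x) \<partial>lborel) = \<infinity>)"

definition int_diverges_at_right :: "(real \<Rightarrow> real) \<Rightarrow> real \<Rightarrow> bool" where
  "int_diverges_at_right f r1 \<longleftrightarrow>
     (\<exists>\<delta>>0. \<forall>\<epsilon>. 0 < \<epsilon> \<and> \<epsilon> < \<delta> \<longrightarrow>
        (\<integral>\<^sup>+ x\<in>{r1-\<epsilon><..<r1}. ennreal (f x) \<partial>lborel) = \<infinity>)"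

end

theory Submission
  imports Defs
begin

lemma key:
  fixes f g :: "real \<Rightarrow> real" and S :: "real set"
  assumes le: "\<And>x. x \<in> S \<Longrightarrow> f x \<le> c * g x" and c: "c > 0" and S: "S \<in> sets borel"
    and cg: "continuous_on S g" and inf: "(\<integral>\<^sup>+ x\<in>S. ennreal (f x) \<partial>lborel) = \<infinity>"
  shows "(\<integral>\<^sup>+ x\<in>S. ennreal (g x) \<partial>lborel) = \<infinity>"
proof -
  have m0: "(\<lambda>x. indicator S x *\<^sub>R g x) \<in> borel_measurable borel"
    by (rule borel_measurable_continuous_on_indicator[OF S cg])
  have m: "(\<lambda>x. ennreal (g x) * indicator S x) \<in> borel_measurable lborel"
  proof -
    have "(\<lambda>x. ennreal (indicator S x *\<^sub>R g x)) \<in> borel_measurable borel" using m0 by measurable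
    moreover have "(\<lambda>x. ennreal (indicator S x *\<^sub>R g x)) = (\<lambda>x. ennreal (g x) * indicator S x)"
      by (auto simp: indicator_def)
    ultimately show ?thesis by simp
  qed
  have "\<infinity> = (\<integral>\<^sup>+ x. ennreal (f x) * indicator S x \<partial>lborel)" using inf by simp
  also have "\<dots> \<le> (\<integral>\<^sup>+ x. ennreal c * (ennreal (g x) * indicator S x) \<partial>lborel)"
  proof (rule nn_integral_mono)
    fix x
    show "ennreal (f x) * indicator S x \<le> ennreal c * (ennreal (g x) * indicator S x)"
    proof (cases "x \<in> S")
      case True
      have "ennreal (f x) \<le> ennreal (c * g x)" using le[OF True] by (rule ennreal_leI)
      also have "\<dots> = ennreal c * ennreal (g x)"
      proof (cases "g x \<ge> 0")
        case True then show ?thesis using c by (simp add: ennreal_mult)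
      next
        case False
        then have "c * g x \<le> 0" using c by (simp add: mult_nonneg_nonpos)
        then show ?thesis using False by (simp add: ennreal_neg)
      qed
      finally show ?thesis using True by simp
    qed simp
  qed
  also have "\<dots> = ennreal c * (\<integral>\<^sup>+ x. ennreal (g x) * indicator S x \<partial>lborel)"
    by (rule nn_integral_cmult[OF m])
  finally have "ennreal c * (\<integral>\<^sup>+ x\<in>S. ennreal (g x) \<partial>lborel) = \<infinity>"
    by (simp add: top_unique)
  then show ?thesis by (simp add: ennreal_mult_eq_top_iff)
qed

lemma left_imp:
  assumes d: "\<delta> > 0" and c: "c > 0" and le: "\<And>x. r0 < x \<Longrightarrow> x < r0 + \<delta> \<Longrightarrow> f x \<le> c * g x"
    and cg: "continuous_on {r0<..<r0+\<delta>} g" and div: "int_diverges_at_left f r0"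
  shows "int_diverges_at_left g r0"
proof -
  obtain d' where d': "d' > 0" "\<And>e. 0 < e \<Longrightarrow> e < d' \<Longrightarrow> (\<integral>\<^sup>+ x\<in>{r0<..<r0+e}. ennreal (f x) \<partial>lborel) = \<infinity>"
    using div unfolding int_diverges_at_left_def by blast
  show ?thesis unfolding int_diverges_at_left_def
  proof (intro exI[of _ "min \<delta> d'"] conjI allI impI)
    show "min \<delta> d' > 0" using d d' by simp
    fix e assume e: "0 < e \<and> e < min \<delta> d'"
    show "(\<integral>\<^sup>+ x\<in>{r0<..<r0+e}. ennreal (g x) \<partial>lborel) = \<infinity>"
    proof (rule key[OF _ c])
      show "continuous_on {r0<..<r0 + e} g" by (rule continuous_on_subset[OF cg]) (use e in auto)
      show "(\<integral>\<^sup>+ x\<in>{r0<..<r0+e}. ennreal (f x) \<partial>lborel) = \<infinity>" using d' e by simp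
    qed (use le e in auto)
  qed
qed

lemma right_imp:
  assumes d: "\<delta> > 0" and c: "c > 0" and le: "\<And>x. r0 - \<delta> < x \<Longrightarrow> x < r0 \<Longrightarrow> f x \<le> c * g x"
    and cg: "continuous_on {r0-\<delta><..<r0} g" and div: "int_diverges_at_right f r0"
  shows "int_diverges_at_right g r0"
proof -
  obtain d' where d': "d' > 0" "\<And>e. 0 < e \<Longrightarrow> e < d' \<Longrightarrow> (\<integral>\<^sup>+ x\<in>{r0-e<..<r0}. ennreal (f x) \<partial>lborel) = \<infinity>"
    using div unfolding int_diverges_at_right_def by blast
  show ?thesis unfolding int_diverges_at_right_def
  proof (intro exI[of _ "min \<delta> d'"] conjI allI impI)
    show "min \<delta> d' > 0" using d d' by simp
    fix e assume e: "0 < e \<and> e < min \<delta> d'"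
    show "(\<integral>\<^sup>+ x\<in>{r0-e<..<r0}. ennreal (g x) \<partial>lborel) = \<infinity>"
    proof (rule key[OF _ c])
      show "continuous_on {r0-e<..<r0} g" by (rule continuous_on_subset[OF cg]) (use e in auto)
      show "(\<integral>\<^sup>+ x\<in>{r0-e<..<r0}. ennreal (f x) \<partial>lborel) = \<infinity>" using d' e by simp
    qed (use le e in auto)
  qed
qed

lemma cmp:
  fixes h t L K :: real
  assumes "0 < L" "L \<le> t" "t \<le> K" "0 \<le> h"
  shows "t*h \<le> (K + 1/L) * h" "h \<le> (K+1/L)*(t*h)" "h/t \<le> (K+1/L)*h" "h \<le> (K+1/L)*(h/t)"
proof -
  have t: "t > 0" using assms by simp
  have K: "K > 0" using assms by simp
  have iL: "1/L > 0" using assms by simp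
  have tK: "t \<le> K + 1/L" using assms iL by linarith
  show "t*h \<le> (K + 1/L) * h" using assms tK by (intro mult_right_mono) auto
  have "1 \<le> t/L" using assms by simp
  then have "h * 1 \<le> h * (t/L)" using assms by (intro mult_left_mono) auto
  then have "h \<le> (t/L) * h" by (simp add: mult.commute)
  also have "\<dots> \<le> (K+1/L)*(t*h)" using assms K t by (simp add: field_simps mult_right_mono)
  finally show "h \<le> (K+1/L)*(t*h)" .
  have "h/t \<le> h/L" using assms t by (intro divide_left_mono) auto
  also have "\<dots> \<le> (K+1/L)*h" using assms K by (simp add: field_simps mult_right_mono)
  finally show "h/t \<le> (K+1/L)*h" .
  have "h = t * (h/t)" using t by simp
  also have "\<dots> \<le> K * (h/t)" using assms t by (intro mult_right_mono) auto
  also have "\<dots> \<le> (K+1/L)*(h/t)" using assms iL t by (intro mult_right_mono) auto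
  finally show "h \<le> (K+1/L)*(h/t)" .
qed
lemma left_iff:
  assumes d: "\<delta> > 0" and c: "c > 0"
    and le: "\<And>x. r0 < x \<Longrightarrow> x < r0 + \<delta> \<Longrightarrow> f x \<le> c * g x \<and> g x \<le> c * f x"
    and cf: "continuous_on {r0<..<r0+\<delta>} f" and cg: "continuous_on {r0<..<r0+\<delta>} g"
  shows "int_diverges_at_left f r0 \<longleftrightarrow> int_diverges_at_left g r0"
  using left_imp[OF d c _ cg, of f] left_imp[OF d c _ cf, of g] le by blast

lemma right_iff:
  assumes d: "\<delta> > 0" and c: "c > 0"
    and le: "\<And>x. r0 - \<delta> < x \<Longrightarrow> x < r0 \<Longrightarrow> f x \<le> c * g x \<and> g x \<le> c * f x"
    and cf: "continuous_on {r0-\<delta><..<r0} f" and cg: "continuous_on {r0-\<delta><..<r0} g"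
  shows "int_diverges_at_right f r0 \<longleftrightarrow> int_diverges_at_right g r0"
  using right_imp[OF d c _ cg, of f] right_imp[OF d c _ cf, of g] le by blast

theorem lemma5p4:
  fixes n :: nat and F G :: "real \<Rightarrow> real" and rm :: real and rp :: ereal
  assumes n: "n \<ge> 1"
    and rm: "0 \<le> rm" and rmp: "ereal rm < rp"
    and contF: "continuous_on {r. rm < r \<and> ereal r < rp} F"
    and contG: "continuous_on {r. rm < r \<and> ereal r < rp} G"
    and Fpos: "\<And>r. rm < r \<Longrightarrow> ereal r < rp \<Longrightarrow> F r > 0"
    and Gpos: "\<And>r. rm < r \<Longrightarrow> ereal r < rp \<Longrightarrow> G r > 0"
  defines "a \<equiv> (\<lambda>r. r ^ n * sqrt (G r / F r))"
    and "b \<equiv> (\<lambda>r. r ^ n * sqrt (F r / G r))"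
  shows "(rm > 0 \<longrightarrow>
            (int_diverges_at_left (\<lambda>r. 1 / b r) rm \<longleftrightarrow> int_diverges_at_left a rm) \<and>
            (int_diverges_at_left a rm \<longleftrightarrow> int_diverges_at_left (\<lambda>r. sqrt (a r / b r)) rm))
       \<and> (\<forall>r1. rp = ereal r1 \<longrightarrow>
            (int_diverges_at_right (\<lambda>r. 1 / b r) r1 \<longleftrightarrow> int_diverges_at_right a r1) \<and>
            (int_diverges_at_right a r1 \<longleftrightarrow> int_diverges_at_right (\<lambda>r. sqrt (a r / b r)) r1))"
proof -
  define D where "D = {r. rm < r \<and> ereal r < rp}"
  define h where "h = (\<lambda>r. sqrt (G r / F r))"
  have posr: "r > 0" if "r \<in> D" for r using that rm unfolding D_def by auto
  have FG: "F r > 0" "G r > 0" if "r \<in> D" for r using that Fpos Gpos unfolding D_def by auto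
  have h0: "h r \<ge> 0" if "r \<in> D" for r unfolding h_def using FG[OF that] by simp
  have ha: "a r = r^n * h r" for r unfolding a_def h_def by simp
  have hb: "1 / b r = h r / r^n" if "r \<in> D" for r
  proof -
    have "sqrt (F r / G r) = 1 / sqrt (G r / F r)"
      by (simp add: real_sqrt_divide)
    then show ?thesis unfolding b_def h_def by simp
  qed
  have hs: "sqrt (a r / b r) = h r" if "r \<in> D" for r
  proof -
    have r: "r > 0" "F r > 0" "G r > 0" using posr FG that by auto
    have "a r / b r = sqrt (G r / F r) / sqrt (F r / G r)" unfolding a_def b_def using r by simp
    also have "\<dots> = sqrt ((G r / F r) / (F r / G r))" by (simp add: real_sqrt_divide)
    also have "(G r / F r) / (F r / G r) = (G r / F r)^2" using r by (simp add: field_simps power2_eq_square)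
    finally have e1: "a r / b r = sqrt ((G r / F r)^2)" .
    have "sqrt ((G r / F r)^2) = G r / F r" by (rule real_sqrt_unique) (use r in auto)
    with e1 have "a r / b r = G r / F r" by simp
    then show ?thesis unfolding h_def by simp
  qed
  have Fnz: "\<forall>x\<in>D. F x \<noteq> 0" using FG(1) by force
  have cF: "continuous_on D F" "continuous_on D G" using contF contG unfolding D_def by auto
  have cH: "continuous_on D h" unfolding h_def
    by (intro continuous_intros cF Fnz)
  have cA: "continuous_on D a" unfolding ha[abs_def] using cH by (intro continuous_intros)
  have cB: "continuous_on D (\<lambda>r. 1 / b r)"
  proof -
    have "continuous_on D (\<lambda>r. h r / r^n)" using cH posr by (intro continuous_intros) auto
    then show ?thesis by (rule continuous_on_cong[THEN iffD2, OF refl, rotated]) (simp add: hb)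
  qed
  have cS: "continuous_on D (\<lambda>r. sqrt (a r / b r))"
    using cH by (rule continuous_on_cong[THEN iffD2, OF refl, rotated]) (simp add: hs)
  have cmps: "(a x \<le> c * h x \<and> h x \<le> c * a x) \<and> (1 / b x \<le> c * h x \<and> h x \<le> c * (1 / b x))
      \<and> (sqrt (a x / b x) \<le> c * h x \<and> h x \<le> c * sqrt (a x / b x))"
    if "0 < lo" "{lo<..<hi} \<subseteq> D" "lo < x" "x < hi" "c = K + 1/lo^n" "hi^n \<le> K" "1 \<le> K" for lo hi x c K
  proof -
    have xD: "x \<in> D" using that by auto
    have xh: "x^n \<le> hi^n" using that by (intro power_mono) auto
    have L: "0 < lo^n" "lo^n \<le> x^n" "x^n \<le> K" using that xh by (auto intro: power_mono)
    have c1: "1 \<le> c" using that L by (simp add: add_increasing2)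
    note C = cmp[OF L h0[OF xD], folded that(5)]
    have hc: "h x \<le> c * h x" using mult_right_mono[OF c1 h0[OF xD]] by simp
    show ?thesis unfolding hs[OF xD] hb[OF xD] unfolding ha[of x] using C hc by blast
  qed
  show ?thesis
  proof (intro conjI impI allI)
    assume rm0: "rm > 0"
    obtain t where t: "rm < t" "ereal t < rp" using ereal_dense2[OF rmp] by auto
    define \<delta> where "\<delta> = t - rm"
    have \<delta>: "\<delta> > 0" using t unfolding \<delta>_def by simp
    have sub: "{rm<..<rm+\<delta>} \<subseteq> D" unfolding D_def \<delta>_def
      using t by (auto intro: less_trans[of _ "ereal t" rp])
    define K where "K = max ((rm+\<delta>)^n) 1"
    define c where "c = K + 1/rm^n"
    have c0: "c > 0" unfolding c_def K_def using rm0 by (simp add: add_pos_pos)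
    have P: "(a x \<le> c * h x \<and> h x \<le> c * a x) \<and> (1 / b x \<le> c * h x \<and> h x \<le> c * (1 / b x))
      \<and> (sqrt (a x / b x) \<le> c * h x \<and> h x \<le> c * sqrt (a x / b x))" if "rm < x" "x < rm + \<delta>" for x
      by (rule cmps[OF rm0 sub that c_def]) (auto simp: K_def)
    have cI: "continuous_on {rm<..<rm+\<delta>} f" if "continuous_on D f" for f
      using continuous_on_subset[OF that sub] .
    have e1: "int_diverges_at_left (\<lambda>r. 1 / b r) rm \<longleftrightarrow> int_diverges_at_left h rm"
      by (rule left_iff[OF \<delta> c0 _ cI[OF cB] cI[OF cH]]) (use P in blast)
    have e2: "int_diverges_at_left a rm \<longleftrightarrow> int_diverges_at_left h rm"
      by (rule left_iff[OF \<delta> c0 _ cI[OF cA] cI[OF cH]]) (use P in blast)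
    have e3: "int_diverges_at_left (\<lambda>r. sqrt (a r / b r)) rm \<longleftrightarrow> int_diverges_at_left h rm"
      by (rule left_iff[OF \<delta> c0 _ cI[OF cS] cI[OF cH]]) (use P in blast)
    show "int_diverges_at_left (\<lambda>r. 1 / b r) rm \<longleftrightarrow> int_diverges_at_left a rm" using e1 e2 by simp
    show "int_diverges_at_left a rm \<longleftrightarrow> int_diverges_at_left (\<lambda>r. sqrt (a r / b r)) rm" using e2 e3 by simp
  next
    fix r1 assume r1: "rp = ereal r1"
    have rr: "rm < r1" using rmp r1 by simp
    define \<delta> where "\<delta> = (r1 - rm) / 2"
    have \<delta>: "\<delta> > 0" using rr unfolding \<delta>_def by simp
    have lo: "0 < r1 - \<delta>" using rr rm unfolding \<delta>_def by simp
    have sub: "{r1-\<delta><..<r1} \<subseteq> D" unfolding D_def \<delta>_def r1 using rr by (auto simp: field_simps)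
    define K where "K = max (r1^n) 1"
    define c where "c = K + 1/(r1-\<delta>)^n"
    have c0: "c > 0" unfolding c_def K_def using lo by (simp add: add_pos_pos)
    have P: "(a x \<le> c * h x \<and> h x \<le> c * a x) \<and> (1 / b x \<le> c * h x \<and> h x \<le> c * (1 / b x))
      \<and> (sqrt (a x / b x) \<le> c * h x \<and> h x \<le> c * sqrt (a x / b x))" if "r1 - \<delta> < x" "x < r1" for x
      by (rule cmps[OF lo sub that c_def]) (auto simp: K_def)
    have cI: "continuous_on {r1-\<delta><..<r1} f" if "continuous_on D f" for f
      using continuous_on_subset[OF that sub] .
    have e1: "int_diverges_at_right (\<lambda>r. 1 / b r) r1 \<longleftrightarrow> int_diverges_at_right h r1"
      by (rule right_iff[OF \<delta> c0 _ cI[OF cB] cI[OF cH]]) (use P in blast)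
    have e2: "int_diverges_at_right a r1 \<longleftrightarrow> int_diverges_at_right h r1"
      by (rule right_iff[OF \<delta> c0 _ cI[OF cA] cI[OF cH]]) (use P in blast)
    have e3: "int_diverges_at_right (\<lambda>r. sqrt (a r / b r)) r1 \<longleftrightarrow> int_diverges_at_right h r1"
      by (rule right_iff[OF \<delta> c0 _ cI[OF cS] cI[OF cH]]) (use P in blast)
    show "int_diverges_at_right (\<lambda>r. 1 / b r) r1 \<longleftrightarrow> int_diverges_at_right a r1" using e1 e2 by simp
    show "int_diverges_at_right a r1 \<longleftrightarrow> int_diverges_at_right (\<lambda>r. sqrt (a r / b r)) r1" using e2 e3 by simp
  qed
qed
end
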